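(* Let $p$ be a prime, $n\ge1$, and let $1\to T^n\to G\xrightarrow{\pi} C_p\to 1$ be an extension of compact Lie groups. Then there exist a closed normal subgroup $N$ of $G$ and an integer $l$ with $1\le l\le n$ such that $G/N$ is a split extension of an $l$-torus by $C_p$, i.e. there is a split short exact sequence $1\to T^l\to G/N\to C_p\to 1$. *)

theory Defs
  imports "HOL-Analysis.Analysis" "HOL-Algebra.Coset" "HOL-Algebra.Elementary_Groups"
begin

definition topological_group :: "('g, 'm) monoid_scheme \<Rightarrow> 'g topology \<Rightarrow> bool" where
  "topological_group G X \<longleftrightarrow> group G \<and> topspace X = carrier G
     \<and> continuous_map (prod_topology X X) X (\<lambda>(x, y). monoid.mult G x y)
     \<and> continuous_map X X (\<lambda>x. m_inv G x)"

text \<open>The l-torus T^l = (S^1)^l, realised as functions nat => complex whose first l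
  coordinates lie on the unit circle and whose other coordinates are 1;
  pointwise multiplication.\<close>
definition torus_group :: "nat \<Rightarrow> (nat \<Rightarrow> complex) monoid" where
  "torus_group l = \<lparr>carrier = {z. (\<forall>i<l. norm (z i) = 1) \<and> (\<forall>i\<ge>l. z i = 1)},
                     monoid.mult = (\<lambda>z w i. z i * w i), one = (\<lambda>i. 1)\<rparr>"

definition torus_topology :: "nat \<Rightarrow> (nat \<Rightarrow> complex) topology" where
  "torus_topology l =
     subtopology (product_topology (\<lambda>_. euclidean) UNIV) (carrier (torus_group l))"

abbreviation cyclic_group :: "nat \<Rightarrow> int monoid" where
  "cyclic_group p \<equiv> integer_mod_group p"

definition cyclic_topology :: "nat \<Rightarrow> int topology" where
  "cyclic_topology p = discrete_topology (carrier (cyclic_group p))"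

definition quotient_topology :: "'a topology \<Rightarrow> ('a \<Rightarrow> 'b) \<Rightarrow> 'b topology" where
  "quotient_topology X f =
     topology (\<lambda>U. U \<subseteq> f ` topspace X \<and> openin X {x \<in> topspace X. f x \<in> U})"

definition quotient_group_topology ::
  "('g, 'm) monoid_scheme \<Rightarrow> 'g topology \<Rightarrow> 'g set \<Rightarrow> 'g set topology" where
  "quotient_group_topology G X N = quotient_topology X (\<lambda>x. r_coset G N x)"

definition torus_extension ::
  "('h, 'm) monoid_scheme \<Rightarrow> 'h topology \<Rightarrow> nat \<Rightarrow> nat
     \<Rightarrow> ((nat \<Rightarrow> complex) \<Rightarrow> 'h) \<Rightarrow> ('h \<Rightarrow> int) \<Rightarrow> bool" where
  "torus_extension H Y l p \<iota> \<pi> \<longleftrightarrow>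
     \<iota> \<in> hom (torus_group l) H \<and> inj_on \<iota> (carrier (torus_group l))
     \<and> continuous_map (torus_topology l) Y \<iota>
     \<and> \<pi> \<in> hom H (cyclic_group p) \<and> \<pi> ` carrier H = carrier (cyclic_group p)
     \<and> continuous_map Y (cyclic_topology p) \<pi>
     \<and> kernel H (cyclic_group p) \<pi> = \<iota> ` carrier (torus_group l)"

definition split_torus_extension ::
  "('h, 'm) monoid_scheme \<Rightarrow> 'h topology \<Rightarrow> nat \<Rightarrow> nat \<Rightarrow> bool" where
  "split_torus_extension H Y l p \<longleftrightarrow>
     (\<exists>\<iota> \<pi> s. torus_extension H Y l p \<iota> \<pi>
        \<and> s \<in> hom (cyclic_group p) H \<and> continuous_map (cyclic_topology p) Y s
        \<and> (\<forall>c \<in> carrier (cyclic_group p). \<pi> (s c) = c))"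

end

theory Submission
  imports Defs
begin

primrec Nk :: "('g,'m) monoid_scheme \<Rightarrow> 'g \<Rightarrow> nat \<Rightarrow> 'g \<Rightarrow> 'g" where
  "Nk G g 0 x = \<one>\<^bsub>G\<^esub>"
| "Nk G g (Suc k) x = x \<otimes>\<^bsub>G\<^esub> (g \<otimes>\<^bsub>G\<^esub> Nk G g k x \<otimes>\<^bsub>G\<^esub> inv\<^bsub>G\<^esub> g)"

definition proot :: "nat \<Rightarrow> nat \<Rightarrow> (nat \<Rightarrow> complex) \<Rightarrow> (nat \<Rightarrow> complex)" where
  "proot n p z = (\<lambda>i. if i < n then (SOME r. r ^ p = z i) else 1)"

lemma torus_carrier: "carrier (torus_group n) = {z. (\<forall>i<n. norm (z i) = 1) \<and> (\<forall>i\<ge>n. z i = 1)}"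
  by (simp add: torus_group_def)
lemma torus_mult: "monoid.mult (torus_group n) = (\<lambda>z w i. z i * w i)"
  by (simp add: torus_group_def)

lemma torus_mult_closed: "z \<in> carrier (torus_group n) \<Longrightarrow> w \<in> carrier (torus_group n)
   \<Longrightarrow> (\<lambda>i. z i * w i) \<in> carrier (torus_group n)"
  by (auto simp: torus_carrier norm_mult)

lemma torus_pow_closed: "z \<in> carrier (torus_group n) \<Longrightarrow> (\<lambda>i. z i ^ k) \<in> carrier (torus_group n)"
  by (auto simp: torus_carrier norm_power)

lemma torus_one: "(\<lambda>i. 1) \<in> carrier (torus_group n)"
  by (auto simp: torus_carrier)

lemma torus_inv: "z \<in> carrier (torus_group n) \<Longrightarrow> (\<lambda>i. inverse (z i)) \<in> carrier (torus_group n)"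
  by (auto simp: torus_carrier norm_inverse)

lemma proot_ok:
  assumes "z \<in> carrier (torus_group n)" "p > 0"
  shows "proot n p z \<in> carrier (torus_group n)" "(\<lambda>i. proot n p z i ^ p) = z"
proof -
  have ex: "\<exists>r. r ^ p = z i" for i
    using exists_complex_root[of p "z i"] assms(2) by (metis neq0_conv)
  have r: "(SOME r. r ^ p = z i) ^ p = z i" for i using someI_ex[OF ex] .
  show "(\<lambda>i. proot n p z i ^ p) = z"
    using assms(1) r by (auto simp: proot_def torus_carrier)
  have "norm (SOME r. r ^ p = z i) = 1" if "i < n" for i
  proof -
    have "norm (z i) = 1" using assms(1) that by (simp add: torus_carrier)
    then have "norm (SOME r. r ^ p = z i) ^ p = 1"
      using r[of i] by (metis norm_power)
    then show ?thesis using assms(2)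
      by (metis norm_ge_zero power_one zero_le_one power_eq_iff_eq_base)
  qed
  then show "proot n p z \<in> carrier (torus_group n)"
    by (auto simp: proot_def torus_carrier)
qed


locale L =
  fixes G :: "('g, 'm) monoid_scheme" (structure) and X :: "'g topology"
    and p n :: nat and \<iota> :: "(nat \<Rightarrow> complex) \<Rightarrow> 'g" and \<pi> :: "'g \<Rightarrow> int"
  assumes prime: "prime p" and tg: "topological_group G X"
    and cpt: "compact_space X" and hd: "Hausdorff_space X"
    and ext: "torus_extension G X n p \<iota> \<pi>"
begin

lemma grp: "group G" using tg by (simp add: topological_group_def)

end

sublocale L \<subseteq> group G by (rule grp)

context L
begin

abbreviation "T \<equiv> carrier (torus_group n)"
abbreviation "K \<equiv> \<iota> ` T"
abbreviation "C \<equiv> cyclic_group p"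

lemma p_pos: "p > 0" and p_gt1: "p > 1" using prime prime_gt_1_nat prime_gt_0_nat by auto

lemma topX: "topspace X = carrier G" using tg by (simp add: topological_group_def)

lemma iota_hom: "\<iota> \<in> hom (torus_group n) G" using ext by (simp add: torus_extension_def)
lemma iota_inj: "inj_on \<iota> T" using ext by (simp add: torus_extension_def)
lemma pi_hom: "\<pi> \<in> hom G C" using ext by (simp add: torus_extension_def)
lemma pi_surj: "\<pi> ` carrier G = carrier C" using ext by (simp add: torus_extension_def)
lemma pi_cont: "continuous_map X (cyclic_topology p) \<pi>" using ext by (simp add: torus_extension_def)
lemma iota_cont: "continuous_map (torus_topology n) X \<iota>" using ext by (simp add: torus_extension_def)
lemma kerK: "kernel G C \<pi> = K" using ext by (simp add: torus_extension_def)

lemma carrC: "carrier C = {0..<int p}" using p_pos by (simp add: carrier_integer_mod_group)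

lemma iota_carr: "z \<in> T \<Longrightarrow> \<iota> z \<in> carrier G"
  using iota_hom by (auto simp: hom_def)

lemma iota_mult: "z \<in> T \<Longrightarrow> w \<in> T \<Longrightarrow> \<iota> (\<lambda>i. z i * w i) = \<iota> z \<otimes> \<iota> w"
  using iota_hom by (auto simp: hom_def torus_mult)

lemma iota_one: "\<iota> (\<lambda>i. 1) = \<one>"
proof -
  have "\<iota> (\<lambda>i. 1) = \<iota> (\<lambda>i. 1) \<otimes> \<iota> (\<lambda>i. 1)"
    using iota_mult[OF torus_one torus_one] by simp
  then show ?thesis using iota_carr[OF torus_one]
    using l_cancel_one'[OF iota_carr[OF torus_one] iota_carr[OF torus_one]] by blast
qed

lemma iota_pow: "z \<in> T \<Longrightarrow> \<iota> z [^] (k::nat) = \<iota> (\<lambda>i. z i ^ k)"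
proof (induction k)
  case 0 then show ?case by (simp add: iota_one)
next
  case (Suc k)
  then have "\<iota> z [^] Suc k = \<iota> (\<lambda>i. z i ^ k) \<otimes> \<iota> z" by simp
  also have "\<dots> = \<iota> (\<lambda>i. z i ^ k * z i)"
    using iota_mult[OF torus_pow_closed Suc.prems] Suc.prems by simp
  finally show ?case by (simp add: mult.commute)
qed

lemma iota_inv: "z \<in> T \<Longrightarrow> inv (\<iota> z) = \<iota> (\<lambda>i. inverse (z i))"
proof -
  assume z: "z \<in> T"
  have "(\<lambda>i. inverse (z i) * z i) = (\<lambda>i. 1)"
  proof
    fix i
    have "z i \<noteq> 0" using z by (cases "i < n") (auto simp: torus_carrier)
    then show "inverse (z i) * z i = 1" by simp
  qed
  then have "\<iota> (\<lambda>i. inverse (z i)) \<otimes> \<iota> z = \<one>"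
    using iota_mult[OF torus_inv[OF z] z] iota_one by simp
  then show ?thesis
    using inv_equality iota_carr z torus_inv by blast
qed

lemma group_hom_pi: "group_hom G C \<pi>"
  using pi_hom by (simp add: group_hom_def group_hom_axioms_def grp)

lemma K_eq: "K = {x \<in> carrier G. \<pi> x = 0}"
  using kerK by (simp add: kernel_def)

lemma K_normal: "K \<lhd> G"
  using group_hom.normal_kernel[OF group_hom_pi] kerK by simp

lemma K_sub: "subgroup K G" using K_normal normal_imp_subgroup by blast

lemma K_carr: "x \<in> K \<Longrightarrow> x \<in> carrier G" using K_eq by auto

lemma K_comm: "x \<in> K \<Longrightarrow> y \<in> K \<Longrightarrow> x \<otimes> y = y \<otimes> x"
proof -
  assume "x \<in> K" "y \<in> K"
  then obtain z w where "z \<in> T" "w \<in> T" "x = \<iota> z" "y = \<iota> w" by auto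
  then show ?thesis using iota_mult[of z w] iota_mult[of w z] by (simp add: mult.commute)
qed

lemma K_conj: "x \<in> carrier G \<Longrightarrow> k \<in> K \<Longrightarrow> x \<otimes> k \<otimes> inv x \<in> K"
  using normal_invE(2)[OF K_normal] by blast

lemma pi_mult: "x \<in> carrier G \<Longrightarrow> y \<in> carrier G \<Longrightarrow> \<pi> (x \<otimes> y) = (\<pi> x + \<pi> y) mod int p"
  using pi_hom by (simp add: hom_def)

lemma pi_carr: "x \<in> carrier G \<Longrightarrow> \<pi> x \<in> {0..<int p}"
  using pi_hom carrC by (auto simp: hom_def)

lemma pi_pow: "x \<in> carrier G \<Longrightarrow> \<pi> (x [^] (k::nat)) = (int k * \<pi> x) mod int p"
proof -
  assume x: "x \<in> carrier G"
  have "\<pi> (x [^] k) = \<pi> x [^]\<^bsub>C\<^esub> k"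
    using group_hom.hom_nat_pow[OF group_hom_pi x] by simp
  also have "\<dots> = (int k * \<pi> x) mod int p"
    by (rule pow_integer_mod_group)
  finally show ?thesis .
qed

end

context L
begin

lemma K_pow: "x \<in> K \<Longrightarrow> x [^] (m::nat) \<in> K"
proof -
  assume x: "x \<in> K"
  then have "x \<in> carrier G" "\<pi> x = 0" using K_eq by auto
  then show ?thesis using pi_pow[of x m] K_eq by simp
qed

lemma K_inv: "x \<in> K \<Longrightarrow> inv x \<in> K"
  by (rule subgroup.m_inv_closed[OF K_sub])

lemma K_mult: "x \<in> K \<Longrightarrow> y \<in> K \<Longrightarrow> x \<otimes> y \<in> K"
  by (rule subgroup.m_closed[OF K_sub])

lemma K_one: "\<one> \<in> K"
  by (rule subgroup.one_closed[OF K_sub])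

lemma Nk_K: "g \<in> carrier G \<Longrightarrow> x \<in> K \<Longrightarrow> Nk G g k x \<in> K"
proof (induction k)
  case 0 then show ?case using K_one by simp
next
  case (Suc k)
  then have "g \<otimes> Nk G g k x \<otimes> inv g \<in> K" using K_conj by blast
  then show ?case using K_mult Suc.prems by simp
qed

lemma inv_cancel1: "g \<in> carrier G \<Longrightarrow> y \<in> carrier G \<Longrightarrow> inv g \<otimes> (g \<otimes> y) = y"
  by (simp add: m_assoc[symmetric])

lemma Nk_pow: "g \<in> carrier G \<Longrightarrow> x \<in> K \<Longrightarrow> (x \<otimes> g) [^] k = Nk G g k x \<otimes> g [^] k"
proof (induction k)
  case 0 then show ?case by simp
next
  case (Suc k)
  have a: "Nk G g k x \<in> carrier G" using Nk_K[OF Suc.prems] K_carr by blast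
  have x: "x \<in> carrier G" using Suc.prems K_carr by blast
  have "(x \<otimes> g) [^] Suc k = (x \<otimes> g) \<otimes> (x \<otimes> g) [^] k"
    by (rule nat_pow_Suc2) (simp add: x Suc.prems)
  also have "\<dots> = (x \<otimes> g) \<otimes> (Nk G g k x \<otimes> g [^] k)"
    using Suc by simp
  also have "\<dots> = x \<otimes> (g \<otimes> Nk G g k x \<otimes> inv g) \<otimes> (g \<otimes> g [^] k)"
    using a x Suc.prems by (simp add: m_assoc inv_cancel1)
  also have "\<dots> = Nk G g (Suc k) x \<otimes> g [^] Suc k"
    using nat_pow_Suc2[OF Suc.prems(1), of k] by (simp only: Nk.simps)
  finally show ?case .
qed

lemma Nk_one: "g \<in> carrier G \<Longrightarrow> Nk G g k \<one> = \<one>"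
  by (induction k) auto

lemma conj_mult: "g \<in> carrier G \<Longrightarrow> a \<in> carrier G \<Longrightarrow> b \<in> carrier G \<Longrightarrow>
   g \<otimes> (a \<otimes> b) \<otimes> inv g = (g \<otimes> a \<otimes> inv g) \<otimes> (g \<otimes> b \<otimes> inv g)"
  by (simp add: m_assoc inv_cancel1)

lemma Nk_mult: "g \<in> carrier G \<Longrightarrow> x \<in> K \<Longrightarrow> y \<in> K \<Longrightarrow> Nk G g k (x \<otimes> y) = Nk G g k x \<otimes> Nk G g k y"
proof (induction k)
  case 0 then show ?case by simp
next
  case (Suc k)
  define a where "a = Nk G g k x"
  define b where "b = Nk G g k y"
  have aK: "a \<in> K" and bK: "b \<in> K" using Nk_K Suc.prems a_def b_def by auto
  define ca where "ca = g \<otimes> a \<otimes> inv g"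
  define cb where "cb = g \<otimes> b \<otimes> inv g"
  have caK: "ca \<in> K" and cbK: "cb \<in> K" using K_conj Suc.prems aK bK ca_def cb_def by auto
  have x: "x \<in> carrier G" and y: "y \<in> carrier G" using Suc.prems K_carr by auto
  have ca: "ca \<in> carrier G" and cb: "cb \<in> carrier G" using caK cbK K_carr by auto
  have "Nk G g (Suc k) (x \<otimes> y) = x \<otimes> y \<otimes> (ca \<otimes> cb)"
    using Suc a_def b_def ca_def cb_def conj_mult[of g a b] aK bK K_carr by simp
  also have "\<dots> = x \<otimes> (y \<otimes> ca) \<otimes> cb" using x y ca cb by (simp add: m_assoc)
  also have "\<dots> = x \<otimes> (ca \<otimes> y) \<otimes> cb" using K_comm[OF Suc.prems(3) caK] by simp
  also have "\<dots> = (x \<otimes> ca) \<otimes> (y \<otimes> cb)" using x y ca cb by (simp add: m_assoc)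
  also have "\<dots> = Nk G g (Suc k) x \<otimes> Nk G g (Suc k) y"
    using a_def b_def ca_def cb_def by simp
  finally show ?case .
qed

lemma Nk_pow_arg: "g \<in> carrier G \<Longrightarrow> x \<in> K \<Longrightarrow> Nk G g k (x [^] (m::nat)) = Nk G g k x [^] m"
proof (induction m)
  case 0 then show ?case by (simp add: Nk_one)
next
  case (Suc m)
  have "Nk G g k (x [^] Suc m) = Nk G g k (x [^] m \<otimes> x)" by simp
  also have "\<dots> = Nk G g k (x [^] m) \<otimes> Nk G g k x"
    using Nk_mult[OF Suc.prems(1) K_pow[OF Suc.prems(2)] Suc.prems(2)] .
  also have "\<dots> = Nk G g k x [^] Suc m" using Suc by simp
  finally show ?case .
qed

lemma Nk_fixed: "g \<in> carrier G \<Longrightarrow> x \<in> carrier G \<Longrightarrow> g \<otimes> x = x \<otimes> g \<Longrightarrow> Nk G g k x = x [^] k"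
proof (induction k)
  case 0 then show ?case by simp
next
  case (Suc k)
  have c: "g \<otimes> x [^] k = x [^] k \<otimes> g"
    using group_commutes_pow[of x g k] Suc.prems by simp
  have "Nk G g (Suc k) x = x \<otimes> (g \<otimes> x [^] k \<otimes> inv g)" using Suc by simp
  also have "\<dots> = x \<otimes> (x [^] k \<otimes> g \<otimes> inv g)" using c by simp
  also have "\<dots> = x \<otimes> x [^] k" using Suc.prems by (simp add: m_assoc)
  also have "\<dots> = x [^] Suc k" using Suc.prems by (simp only: nat_pow_Suc2)
  finally show ?case .
qed

definition "NN = {x \<in> K. x [^] p = \<one>}"

lemma exists_h: "\<exists>h \<in> carrier G. \<pi> h = 1 \<and> h [^] p \<in> NN"
proof -
  have "1 \<in> carrier C" using p_gt1 by simp
  then have "1 \<in> \<pi> ` carrier G" using pi_surj by simp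
  then obtain g where g: "g \<in> carrier G" "\<pi> g = 1" by (metis imageE)
  define t where "t = g [^] p"
  have "\<pi> t = 0" using pi_pow[OF g(1), of p] g(2) t_def by simp
  then have tK: "t \<in> K" using K_eq g(1) t_def by blast
  then obtain w0 where w0: "w0 \<in> T" "t = \<iota> w0" by blast
  define r where "r = \<iota> (proot n p (\<lambda>i. inverse (w0 i)))"
  have pr1: "proot n p (\<lambda>i. inverse (w0 i)) \<in> T"
    by (rule proot_ok(1)[OF torus_inv[OF w0(1)] p_pos])
  have pr2: "(\<lambda>i. proot n p (\<lambda>i. inverse (w0 i)) i ^ p) = (\<lambda>i. inverse (w0 i))"
    by (rule proot_ok(2)[OF torus_inv[OF w0(1)] p_pos])
  have rK: "r \<in> K" using r_def pr1 by blast
  have "r [^] p = \<iota> (\<lambda>i. proot n p (\<lambda>i. inverse (w0 i)) i ^ p)"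
    unfolding r_def by (rule iota_pow[OF pr1])
  also have "\<dots> = \<iota> (\<lambda>i. inverse (w0 i))" by (simp only: pr2)
  also have "\<dots> = inv t" using iota_inv[OF w0(1)] w0(2) by simp
  finally have rp: "r [^] p = inv t" .
  have tc1: "t \<in> carrier G" using K_carr[OF tK] .
  have tc2: "inv t \<in> K" using K_inv[OF tK] .
  have tc3: "inv t \<in> carrier G" using K_carr[OF tc2] .
  define h where "h = r \<otimes> g"
  have rc: "r \<in> carrier G" using K_carr[OF rK] .
  have hc: "h \<in> carrier G" unfolding h_def using rc g(1) by (rule m_closed)
  have pr0: "\<pi> r = 0" using rK K_eq by blast
  have pih: "\<pi> h = 1" unfolding h_def using pi_mult[OF rc g(1)] pr0 g(2) p_gt1 by simp
  have hp: "h [^] p = Nk G g p r \<otimes> t"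
    unfolding h_def t_def by (rule Nk_pow[OF g(1) rK])
  have aK: "Nk G g p r \<in> K" using Nk_K[OF g(1) rK] .
  have hpK: "h [^] p \<in> K" unfolding hp by (rule K_mult[OF aK tK])
  have itg: "g \<otimes> inv t = inv t \<otimes> g"
  proof -
    have "inv t = inv g [^] p" using nat_pow_inv[OF g(1)] t_def by simp
    then show ?thesis using group_commutes_pow[of "inv g" g p] g by simp
  qed
  have "(h [^] p) [^] p = Nk G g p r [^] p \<otimes> t [^] p"
    unfolding hp by (rule pow_mult_distrib[OF K_comm[OF aK tK] K_carr[OF aK] tc1])
  also have "Nk G g p r [^] p = Nk G g p (inv t)"
  proof -
    have "Nk G g p (r [^] p) = Nk G g p r [^] p" by (rule Nk_pow_arg[OF g(1) rK])
    then show ?thesis unfolding rp by (rule sym)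
  qed
  also have "\<dots> = inv t [^] p" using Nk_fixed[OF g(1) tc3 itg] .
  also have "inv t [^] p \<otimes> t [^] p = \<one>" by (simp add: nat_pow_inv[OF tc1] tc1)
  finally have "(h [^] p) [^] p = \<one>" .
  then show ?thesis unfolding NN_def using hc pih hpK by blast
qed

end

context L
begin

lemma inv_cancel2: "x \<in> carrier G \<Longrightarrow> y \<in> carrier G \<Longrightarrow> x \<otimes> (inv x \<otimes> y) = y"
  by (simp add: m_assoc[symmetric])

lemma conj_pow: "x \<in> carrier G \<Longrightarrow> h \<in> carrier G \<Longrightarrow> (x \<otimes> h \<otimes> inv x) [^] (k::nat) = x \<otimes> h [^] k \<otimes> inv x"
proof (induction k)
  case 0 then show ?case by simp
next
  case (Suc k)
  have "(x \<otimes> h \<otimes> inv x) [^] Suc k = (x \<otimes> h [^] k \<otimes> inv x) \<otimes> (x \<otimes> h \<otimes> inv x)"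
    using Suc by simp
  also have "\<dots> = x \<otimes> (h [^] k \<otimes> h) \<otimes> inv x"
    using Suc.prems by (simp add: m_assoc inv_cancel1)
  finally show ?case by simp
qed

lemma NN_K: "x \<in> NN \<Longrightarrow> x \<in> K" by (simp add: NN_def)
lemma NN_pow: "x \<in> NN \<Longrightarrow> x [^] p = \<one>" by (simp add: NN_def)

lemma NN_sub: "subgroup NN G"
proof (rule subgroupI)
  show "NN \<subseteq> carrier G" using NN_K K_carr by blast
  have "\<one> \<in> NN" unfolding NN_def using K_one nat_pow_one by blast
  then show "NN \<noteq> {}" by blast
next
  fix a assume a: "a \<in> NN"
  then have ac: "a \<in> carrier G" using NN_K K_carr by blast
  have "inv a [^] p = \<one>" using nat_pow_inv[OF ac, of p] NN_pow[OF a] by simp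
  then show "inv a \<in> NN" unfolding NN_def using K_inv[OF NN_K[OF a]] by blast
next
  fix a b assume a: "a \<in> NN" and b: "b \<in> NN"
  have "(a \<otimes> b) [^] p = a [^] p \<otimes> b [^] p"
    by (rule pow_mult_distrib[OF K_comm[OF NN_K[OF a] NN_K[OF b]] K_carr[OF NN_K[OF a]] K_carr[OF NN_K[OF b]]])
  then have "(a \<otimes> b) [^] p = \<one>" using NN_pow[OF a] NN_pow[OF b] by simp
  then show "a \<otimes> b \<in> NN" unfolding NN_def using K_mult[OF NN_K[OF a] NN_K[OF b]] by blast
qed

lemma NN_normal: "NN \<lhd> G"
proof (rule normal_invI[OF NN_sub])
  fix x h assume x: "x \<in> carrier G" and h: "h \<in> NN"
  have hc: "h \<in> carrier G" using NN_K[OF h] K_carr by blast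
  have "(x \<otimes> h \<otimes> inv x) [^] p = \<one>"
    using conj_pow[OF x hc, of p] NN_pow[OF h] x by simp
  then show "x \<otimes> h \<otimes> inv x \<in> NN" unfolding NN_def using K_conj[OF x NN_K[OF h]] by blast
qed

lemma mult_cont: "continuous_map (prod_topology X X) X (\<lambda>(x, y). x \<otimes> y)"
  using tg by (simp add: topological_group_def)

lemma pow_cont: "continuous_map X X (\<lambda>x. x [^] (k::nat))"
proof (induction k)
  case 0 then show ?case using topX by simp
next
  case (Suc k)
  have "continuous_map X X ((\<lambda>(x, y). x \<otimes> y) \<circ> (\<lambda>x. (x [^] k, x)))"
    by (rule continuous_map_compose[OF continuous_map_pairedI[OF Suc continuous_map_id[unfolded id_def]] mult_cont])
  moreover have "((\<lambda>(x, y). x \<otimes> y) \<circ> (\<lambda>x. (x [^] k, x))) = (\<lambda>x. x [^] Suc k)"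
    by (simp add: fun_eq_iff)
  ultimately show ?case by simp
qed

lemma NN_closed: "closedin X NN"
proof -
  have c1: "closedin X {x \<in> topspace X. \<pi> x \<in> {0}}"
    by (rule closedin_continuous_map_preimage[OF pi_cont]) (simp add: cyclic_topology_def)
  have c2: "closedin X {x \<in> topspace X. x [^] p \<in> {\<one>}}"
    by (rule closedin_continuous_map_preimage[OF pow_cont])
       (rule closedin_t1_singleton[OF Hausdorff_imp_t1_space[OF hd]], simp add: topX)
  have "NN = {x \<in> topspace X. \<pi> x \<in> {0}} \<inter> {x \<in> topspace X. x [^] p \<in> {\<one>}}"
    unfolding NN_def K_eq topX by auto
  then show ?thesis using closedin_Int[OF c1 c2] by simp
qed

lemma coset_eq: "a \<in> K \<Longrightarrow> b \<in> K \<Longrightarrow> a [^] p = b [^] p \<Longrightarrow> NN #> a = NN #> b"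
proof -
  assume aK: "a \<in> K" and bK: "b \<in> K" and e: "a [^] p = b [^] p"
  have ac: "a \<in> carrier G" and bc: "b \<in> carrier G" using aK bK K_carr by auto
  have ibK: "inv b \<in> K" using K_inv[OF bK] .
  have "(a \<otimes> inv b) [^] p = a [^] p \<otimes> inv b [^] p"
    by (rule pow_mult_distrib[OF K_comm[OF aK ibK] ac K_carr[OF ibK]])
  also have "\<dots> = b [^] p \<otimes> inv (b [^] p)" using e nat_pow_inv[OF bc] by simp
  also have "\<dots> = \<one>" using bc by simp
  finally have "a \<otimes> inv b \<in> NN" unfolding NN_def using K_mult[OF aK ibK] by blast
  then have "a \<in> NN #> b" using subgroup.rcos_module_rev[OF NN_sub grp bc ac] by blast
  then show ?thesis using repr_independence[OF _ bc NN_sub] by simp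
qed

lemma coset_eq_rev: "a \<in> K \<Longrightarrow> b \<in> K \<Longrightarrow> NN #> a = NN #> b \<Longrightarrow> a [^] p = b [^] p"
proof -
  assume aK: "a \<in> K" and bK: "b \<in> K" and e: "NN #> a = NN #> b"
  have ac: "a \<in> carrier G" and bc: "b \<in> carrier G" using aK bK K_carr by auto
  have ibK: "inv b \<in> K" using K_inv[OF bK] .
  have "a \<in> NN #> b" using rcos_self[OF ac NN_sub] e by simp
  then have "a \<otimes> inv b \<in> NN" using subgroup.rcos_module_imp[OF NN_sub grp bc] by blast
  then have "(a \<otimes> inv b) [^] p = \<one>" by (rule NN_pow)
  moreover have "(a \<otimes> inv b) [^] p = a [^] p \<otimes> inv b [^] p"
    by (rule pow_mult_distrib[OF K_comm[OF aK ibK] ac K_carr[OF ibK]])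
  ultimately have "a [^] p \<otimes> inv (b [^] p) = \<one>" using nat_pow_inv[OF bc] by simp
  then have "a [^] p \<otimes> inv (b [^] p) \<otimes> b [^] p = b [^] p" using bc by simp
  then show ?thesis using ac bc by (simp add: m_assoc)
qed

lemma pi_coset: "x \<in> carrier G \<Longrightarrow> \<pi> (SOME y. y \<in> NN #> x) = \<pi> x"
proof -
  assume x: "x \<in> carrier G"
  have "\<exists>y. y \<in> NN #> x" using rcos_self[OF x NN_sub] by blast
  then have "(SOME y. y \<in> NN #> x) \<in> NN #> x" by (rule someI_ex)
  then obtain m where m: "m \<in> NN" "(SOME y. y \<in> NN #> x) = m \<otimes> x"
    unfolding r_coset_def by blast
  have mc: "m \<in> carrier G" and pm: "\<pi> m = 0" using NN_K[OF m(1)] K_eq by auto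
  have "\<pi> (m \<otimes> x) = \<pi> x" using pi_mult[OF mc x] pm pi_carr[OF x] by simp
  then show ?thesis using m(2) by simp
qed

end

lemma istop_quot: "istopology (\<lambda>U. U \<subseteq> f ` topspace X \<and> openin X {x \<in> topspace X. f x \<in> U})"
proof -
  have i: "S \<inter> T \<subseteq> f ` topspace X \<and> openin X {x \<in> topspace X. f x \<in> S \<inter> T}"
    if S: "S \<subseteq> f ` topspace X \<and> openin X {x \<in> topspace X. f x \<in> S}"
    and T: "T \<subseteq> f ` topspace X \<and> openin X {x \<in> topspace X. f x \<in> T}" for S T
  proof -
    have "{x \<in> topspace X. f x \<in> S \<inter> T} = {x \<in> topspace X. f x \<in> S} \<inter> {x \<in> topspace X. f x \<in> T}"
      by blast
    then show ?thesis using S T openin_Int by auto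
  qed
  have u: "\<Union>\<K> \<subseteq> f ` topspace X \<and> openin X {x \<in> topspace X. f x \<in> \<Union>\<K>}"
    if K: "\<forall>K\<in>\<K>. K \<subseteq> f ` topspace X \<and> openin X {x \<in> topspace X. f x \<in> K}" for \<K>
  proof -
    have "{x \<in> topspace X. f x \<in> \<Union>\<K>} = \<Union> ((\<lambda>K. {x \<in> topspace X. f x \<in> K}) ` \<K>)"
      by blast
    moreover have "openin X (\<Union> ((\<lambda>K. {x \<in> topspace X. f x \<in> K}) ` \<K>))"
      using K by (intro openin_Union) auto
    ultimately show ?thesis using K by auto
  qed
  show ?thesis
    apply (simp only: istopology_def)
    apply (rule conjI)
     apply (intro allI impI)
     apply (erule (1) i)
    apply (intro allI impI)
    apply (erule u)
    done
qed

lemma openin_quot: "openin (quotient_topology X f) U \<longleftrightarrow> U \<subseteq> f ` topspace X \<and> openin X {x \<in> topspace X. f x \<in> U}"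
  unfolding quotient_topology_def topology_inverse'[OF istop_quot] ..

lemma topspace_quot: "topspace (quotient_topology X f) = f ` topspace X"
proof
  show "topspace (quotient_topology X f) \<subseteq> f ` topspace X"
    using openin_quot[of X f "topspace (quotient_topology X f)"] by simp
  have "openin (quotient_topology X f) (f ` topspace X)"
  proof -
    have "{x \<in> topspace X. f x \<in> f ` topspace X} = topspace X" by auto
    then show ?thesis unfolding openin_quot by auto
  qed
  then show "f ` topspace X \<subseteq> topspace (quotient_topology X f)"
    by (rule openin_subset)
qed

lemma torus_PiE: "carrier (torus_group n) = PiE UNIV (\<lambda>i. if i < n then sphere 0 1 else {1})"
  by (auto simp: torus_carrier PiE_iff split: if_splits)

lemma torus_topspace: "topspace (torus_topology n) = carrier (torus_group n)"
  by (simp add: torus_topology_def)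

lemma torus_compact: "compact_space (torus_topology n)"
  unfolding torus_topology_def torus_PiE
  by (rule compact_space_subtopology) (auto simp: compactin_PiE)

lemma torus_hd: "Hausdorff_space (torus_topology n)"
  unfolding torus_topology_def
  by (rule Hausdorff_space_subtopology) (simp add: Hausdorff_space_product_topology)

lemma torus_powmap_cont: "continuous_map (torus_topology n) (torus_topology n) (\<lambda>w i. w i ^ p)"
proof -
  have "continuous_map (torus_topology n) euclidean (\<lambda>w. w k ^ p)" for k
  proof -
    have c1: "continuous_map (torus_topology n) euclidean (\<lambda>w. w k)"
      unfolding torus_topology_def
      by (rule continuous_map_from_subtopology[OF continuous_map_product_projection]) simp
    have c2: "continuous_map euclidean euclidean (\<lambda>z::complex. z ^ p)"
      by (simp add: continuous_intros)
    show ?thesis using continuous_map_compose[OF c1 c2] by (simp add: o_def)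
  qed
  then have "continuous_map (torus_topology n) (product_topology (\<lambda>_. euclidean) UNIV) (\<lambda>w i. w i ^ p)"
    by (simp add: continuous_map_componentwise_UNIV)
  moreover have "(\<lambda>w i. w i ^ p) \<in> topspace (torus_topology n) \<rightarrow> carrier (torus_group n)"
    using torus_pow_closed by (auto simp: torus_topspace)
  ultimately have "continuous_map (torus_topology n)
      (subtopology (product_topology (\<lambda>_. euclidean) UNIV) (carrier (torus_group n))) (\<lambda>w i. w i ^ p)"
    using continuous_map_in_subtopology by blast
  then show ?thesis unfolding torus_topology_def[of n, symmetric] .
qed


context L
begin

abbreviation "QT \<equiv> quotient_group_topology G X NN"

lemma QT_def': "QT = quotient_topology X (\<lambda>x. NN #> x)"
  by (simp add: quotient_group_topology_def)

lemma QT_top: "topspace QT = carrier (G Mod NN)"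
  unfolding QT_def' topspace_quot topX carrier_FactGroup ..

lemma QT_open: "openin QT U \<longleftrightarrow> U \<subseteq> carrier (G Mod NN) \<and> openin X {x \<in> carrier G. NN #> x \<in> U}"
  unfolding QT_def' openin_quot topX carrier_FactGroup ..

lemma coset_carr: "x \<in> carrier G \<Longrightarrow> NN #> x \<in> carrier (G Mod NN)"
  unfolding carrier_FactGroup by (rule imageI)

lemma q_cont: "continuous_map X QT (\<lambda>x. NN #> x)"
  unfolding continuous_map_def
proof (intro conjI allI impI)
  show "(\<lambda>x. NN #> x) \<in> topspace X \<rightarrow> topspace QT"
    unfolding QT_top topX using coset_carr by blast
next
  fix U assume "openin QT U"
  then show "openin X {x \<in> topspace X. NN #> x \<in> U}" unfolding QT_open topX by blast
qed

definition "i2 z = NN #> \<iota> (proot n p z)"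
definition "pi2 S = \<pi> (SOME y. y \<in> S)"

lemma proot_T: "z \<in> T \<Longrightarrow> proot n p z \<in> T"
  by (rule proot_ok(1)[OF _ p_pos])

lemma iota_proot_pow: "z \<in> T \<Longrightarrow> \<iota> (proot n p z) [^] p = \<iota> z"
  using iota_pow[OF proot_T, of z p] proot_ok(2)[OF _ p_pos, of z n] by simp

lemma pi2_coset: "x \<in> carrier G \<Longrightarrow> pi2 (NN #> x) = \<pi> x"
  unfolding pi2_def by (rule pi_coset)

lemma i2_carr: "z \<in> T \<Longrightarrow> i2 z \<in> carrier (G Mod NN)"
  unfolding i2_def by (rule coset_carr[OF iota_carr[OF proot_T]])

lemma i2_hom: "i2 \<in> hom (torus_group n) (G Mod NN)"
proof -
  interpret N: normal NN G by (rule NN_normal)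
  have "i2 (\<lambda>i. z i * w i) = i2 z <#> i2 w" if z: "z \<in> T" and w: "w \<in> T" for z w
  proof -
    have zw: "(\<lambda>i. z i * w i) \<in> T" by (rule torus_mult_closed[OF z w])
    have pz: "proot n p z \<in> T" and pw: "proot n p w \<in> T" using proot_T z w by auto
    have m: "(\<lambda>i. proot n p z i * proot n p w i) \<in> T" by (rule torus_mult_closed[OF pz pw])
    have "i2 z <#> i2 w = NN #> (\<iota> (proot n p z) \<otimes> \<iota> (proot n p w))"
      unfolding i2_def by (rule N.rcos_sum[OF iota_carr[OF pz] iota_carr[OF pw]])
    also have "\<dots> = NN #> \<iota> (\<lambda>i. proot n p z i * proot n p w i)"
      using iota_mult[OF pz pw] by simp
    also have "\<dots> = i2 (\<lambda>i. z i * w i)" unfolding i2_def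
    proof (rule coset_eq)
      show "\<iota> (\<lambda>i. proot n p z i * proot n p w i) \<in> K" using m by (rule imageI)
      show "\<iota> (proot n p (\<lambda>i. z i * w i)) \<in> K" using proot_T[OF zw] by (rule imageI)
      have e: "(\<lambda>i. (proot n p z i * proot n p w i) ^ p) = (\<lambda>i. z i * w i)"
      proof
        fix i
        have "proot n p z i ^ p = z i" using proot_ok(2)[OF z p_pos] by (metis)
        moreover have "proot n p w i ^ p = w i" using proot_ok(2)[OF w p_pos] by (metis)
        ultimately show "(proot n p z i * proot n p w i) ^ p = z i * w i"
          by (simp add: power_mult_distrib)
      qed
      show "\<iota> (\<lambda>i. proot n p z i * proot n p w i) [^] p = \<iota> (proot n p (\<lambda>i. z i * w i)) [^] p"
        unfolding iota_pow[OF m] iota_proot_pow[OF zw] e ..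
    qed
    finally show ?thesis by simp
  qed
  then show ?thesis unfolding hom_def using i2_carr by (auto simp: torus_mult)
qed

lemma i2_inj: "inj_on i2 T"
proof (rule inj_onI)
  fix z w assume z: "z \<in> T" and w: "w \<in> T" and e: "i2 z = i2 w"
  have "\<iota> (proot n p z) [^] p = \<iota> (proot n p w) [^] p"
    by (rule coset_eq_rev[OF imageI[OF proot_T[OF z]] imageI[OF proot_T[OF w]] e[unfolded i2_def]])
  then have "\<iota> z = \<iota> w" unfolding iota_proot_pow[OF z] iota_proot_pow[OF w] .
  then show "z = w" using iota_inj z w by (meson inj_onD)
qed

lemma i2_pow: "w \<in> T \<Longrightarrow> i2 (\<lambda>i. w i ^ p) = NN #> \<iota> w"
proof -
  assume w: "w \<in> T"
  have wp: "(\<lambda>i. w i ^ p) \<in> T" by (rule torus_pow_closed[OF w])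
  show ?thesis unfolding i2_def
  proof (rule coset_eq)
    show "\<iota> (proot n p (\<lambda>i. w i ^ p)) \<in> K" using proot_T[OF wp] by (rule imageI)
    show "\<iota> w \<in> K" using w by (rule imageI)
    show "\<iota> (proot n p (\<lambda>i. w i ^ p)) [^] p = \<iota> w [^] p"
      unfolding iota_proot_pow[OF wp] iota_pow[OF w] ..
  qed
qed

lemma i2_cont: "continuous_map (torus_topology n) QT i2"
proof -
  have qm: "quotient_map (torus_topology n) (torus_topology n) (\<lambda>w i. w i ^ p)"
  proof (rule continuous_imp_quotient_map[OF torus_powmap_cont torus_compact torus_hd])
    show "(\<lambda>w i. w i ^ p) ` topspace (torus_topology n) = topspace (torus_topology n)"
    proof
      show "(\<lambda>w i. w i ^ p) ` topspace (torus_topology n) \<subseteq> topspace (torus_topology n)"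
        unfolding torus_topspace using torus_pow_closed by blast
      show "topspace (torus_topology n) \<subseteq> (\<lambda>w i. w i ^ p) ` topspace (torus_topology n)"
      proof
        fix z assume "z \<in> topspace (torus_topology n)"
        then have z: "z \<in> T" by (simp add: torus_topspace)
        have "z = (\<lambda>i. proot n p z i ^ p)" using proot_ok(2)[OF z p_pos] by simp
        then show "z \<in> (\<lambda>w i. w i ^ p) ` topspace (torus_topology n)"
          using proot_T[OF z] unfolding torus_topspace by blast
      qed
    qed
  qed
  have c: "continuous_map (torus_topology n) QT ((\<lambda>x. NN #> x) \<circ> \<iota>)"
    by (rule continuous_map_compose[OF iota_cont q_cont])
  have "continuous_map (torus_topology n) QT (i2 \<circ> (\<lambda>w i. w i ^ p))"
  proof (rule continuous_map_eq[OF c])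
    fix w assume "w \<in> topspace (torus_topology n)"
    then have w: "w \<in> T" by (simp add: torus_topspace)
    show "((\<lambda>x. NN #> x) \<circ> \<iota>) w = (i2 \<circ> (\<lambda>w i. w i ^ p)) w"
      using i2_pow[OF w] by simp
  qed
  then show ?thesis by (rule continuous_compose_quotient_map[OF qm])
qed

lemma FactGroup_cases: "S \<in> carrier (G Mod NN) \<Longrightarrow> (\<And>x. x \<in> carrier G \<Longrightarrow> S = NN #> x \<Longrightarrow> P) \<Longrightarrow> P"
  unfolding carrier_FactGroup by blast

lemma pi2_hom: "pi2 \<in> hom (G Mod NN) C"
proof -
  interpret N: normal NN G by (rule NN_normal)
  have c: "pi2 S \<in> carrier C" if "S \<in> carrier (G Mod NN)" for S
    using that by (rule FactGroup_cases) (use pi2_coset pi_hom in \<open>auto simp: hom_def\<close>)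
  have m: "pi2 (S <#> S') = (pi2 S + pi2 S') mod int p"
    if SS: "S \<in> carrier (G Mod NN)" "S' \<in> carrier (G Mod NN)" for S S'
  proof -
    obtain x where x: "x \<in> carrier G" "S = NN #> x" using SS(1) by (rule FactGroup_cases)
    obtain y where y: "y \<in> carrier G" "S' = NN #> y" using SS(2) by (rule FactGroup_cases)
    have "S <#> S' = NN #> (x \<otimes> y)" unfolding x y by (rule N.rcos_sum[OF x(1) y(1)])
    then show ?thesis using pi2_coset x y pi_mult[OF x(1) y(1)] by simp
  qed
  show ?thesis unfolding hom_def using c m by simp
qed

lemma pi2_surj: "pi2 ` carrier (G Mod NN) = carrier C"
proof
  show "pi2 ` carrier (G Mod NN) \<subseteq> carrier C" using pi2_hom by (auto simp: hom_def)
  show "carrier C \<subseteq> pi2 ` carrier (G Mod NN)"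
  proof
    fix c assume "c \<in> carrier C"
    then obtain x where x: "x \<in> carrier G" "c = \<pi> x" using pi_surj by (metis imageE)
    then have "c = pi2 (NN #> x)" using pi2_coset by simp
    then show "c \<in> pi2 ` carrier (G Mod NN)" using coset_carr[OF x(1)] by blast
  qed
qed

lemma pi2_cont: "continuous_map QT (cyclic_topology p) pi2"
  unfolding continuous_map_def
proof (intro conjI allI impI)
  show "pi2 \<in> topspace QT \<rightarrow> topspace (cyclic_topology p)"
    unfolding QT_top cyclic_topology_def using pi2_hom by (simp add: hom_def)
next
  fix U assume U: "openin (cyclic_topology p) U"
  have "{x \<in> carrier G. NN #> x \<in> {S \<in> topspace QT. pi2 S \<in> U}} = {x \<in> topspace X. \<pi> x \<in> U}"
    using coset_carr pi2_coset unfolding QT_top topX by auto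
  moreover have "openin X {x \<in> topspace X. \<pi> x \<in> U}"
    by (rule openin_continuous_map_preimage[OF pi_cont U])
  ultimately show "openin QT {S \<in> topspace QT. pi2 S \<in> U}"
    unfolding QT_open using QT_top by simp
qed

lemma pi2_kernel: "kernel (G Mod NN) C pi2 = i2 ` T"
proof
  show "kernel (G Mod NN) C pi2 \<subseteq> i2 ` T"
  proof
    fix S assume "S \<in> kernel (G Mod NN) C pi2"
    then have S: "S \<in> carrier (G Mod NN)" "pi2 S = 0" by (auto simp: kernel_def)
    obtain x where x: "x \<in> carrier G" "S = NN #> x" using S(1) by (rule FactGroup_cases)
    have "\<pi> x = 0" using S(2) x pi2_coset by simp
    then have "x \<in> K" using x(1) K_eq by blast
    then obtain w where w: "w \<in> T" "x = \<iota> w" by blast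
    have "S = i2 (\<lambda>i. w i ^ p)" using i2_pow[OF w(1)] x w by simp
    then show "S \<in> i2 ` T" using torus_pow_closed[OF w(1)] by blast
  qed
  show "i2 ` T \<subseteq> kernel (G Mod NN) C pi2"
  proof
    fix S assume "S \<in> i2 ` T"
    then obtain z where z: "z \<in> T" "S = i2 z" by blast
    have "\<iota> (proot n p z) \<in> K" using proot_T[OF z(1)] by (rule imageI)
    then have "\<pi> (\<iota> (proot n p z)) = 0" using K_eq by blast
    then have "pi2 S = 0" using z pi2_coset[OF iota_carr[OF proot_T[OF z(1)]]] by (simp add: i2_def)
    then show "S \<in> kernel (G Mod NN) C pi2" using i2_carr[OF z(1)] z(2) by (simp add: kernel_def)
  qed
qed

end

context L
begin

definition "hh = (SOME h. h \<in> carrier G \<and> \<pi> h = 1 \<and> h [^] p \<in> NN)"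

lemma hh: "hh \<in> carrier G" "\<pi> hh = 1" "hh [^] p \<in> NN"
proof -
  have "\<exists>h. h \<in> carrier G \<and> \<pi> h = 1 \<and> h [^] p \<in> NN" using exists_h by blast
  then have "hh \<in> carrier G \<and> \<pi> hh = 1 \<and> hh [^] p \<in> NN" unfolding hh_def by (rule someI_ex)
  then show "hh \<in> carrier G" "\<pi> hh = 1" "hh [^] p \<in> NN" by auto
qed

lemma NN_carr: "NN \<subseteq> carrier G" using NN_K K_carr by blast

lemma coset_absorb: "a \<in> NN \<Longrightarrow> y \<in> carrier G \<Longrightarrow> NN #> (a \<otimes> y) = NN #> y"
proof -
  assume a: "a \<in> NN" and y: "y \<in> carrier G"
  have "a \<otimes> y \<in> NN #> y" by (rule rcosI[OF a NN_carr y])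
  then show ?thesis using repr_independence[OF _ y NN_sub] by simp
qed

lemma NN_pow_closed: "a \<in> NN \<Longrightarrow> a [^] (j::nat) \<in> NN"
proof -
  assume a: "a \<in> NN"
  have ac: "a \<in> carrier G" using a NN_carr by blast
  have "(a [^] j) [^] p = a [^] (j * p)" by (rule nat_pow_pow[OF ac])
  also have "\<dots> = (a [^] p) [^] j" by (simp add: nat_pow_pow[OF ac] mult.commute)
  also have "\<dots> = \<one>" using NN_pow[OF a] by simp
  finally show ?thesis unfolding NN_def using K_pow[OF NN_K[OF a]] by blast
qed

lemma hmod: "NN #> hh [^] (k::nat) = NN #> hh [^] (k mod p)"
proof -
  have "hh [^] k = hh [^] (p * (k div p)) \<otimes> hh [^] (k mod p)"
    using nat_pow_mult[OF hh(1), of "p * (k div p)" "k mod p"] by simp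
  also have "hh [^] (p * (k div p)) = (hh [^] p) [^] (k div p)"
    by (rule nat_pow_pow[OF hh(1), symmetric])
  finally have e: "hh [^] k = (hh [^] p) [^] (k div p) \<otimes> hh [^] (k mod p)" .
  show ?thesis unfolding e by (rule coset_absorb[OF NN_pow_closed[OF hh(3)]]) (simp add: hh(1))
qed

definition "s2 c = NN #> hh [^] nat c"

lemma s2_hom: "s2 \<in> hom C (G Mod NN)"
proof -
  interpret N: normal NN G by (rule NN_normal)
  have c: "s2 c \<in> carrier (G Mod NN)" for c unfolding s2_def by (rule coset_carr) (simp add: hh(1))
  have m: "s2 ((a + b) mod int p) = s2 a <#> s2 b" if a: "a \<in> carrier C" and b: "b \<in> carrier C" for a b
  proof -
    have a0: "a \<ge> 0" and b0: "b \<ge> 0" using a b carrC by auto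
    have "s2 a <#> s2 b = NN #> (hh [^] nat a \<otimes> hh [^] nat b)"
      unfolding s2_def by (rule N.rcos_sum) (simp_all add: hh(1))
    also have "\<dots> = NN #> hh [^] (nat a + nat b)" by (simp add: nat_pow_mult hh(1))
    also have "\<dots> = NN #> hh [^] ((nat a + nat b) mod p)" by (rule hmod)
    also have "(nat a + nat b) mod p = nat ((a + b) mod int p)"
      using a0 b0 by (simp add: nat_mod_distrib nat_add_distrib)
    finally show ?thesis unfolding s2_def by simp
  qed
  show ?thesis unfolding hom_def using c m by simp
qed

lemma s2_section: "c \<in> carrier C \<Longrightarrow> pi2 (s2 c) = c"
proof -
  assume c: "c \<in> carrier C"
  have c0: "0 \<le> c" "c < int p" using c carrC by auto
  have "pi2 (s2 c) = \<pi> (hh [^] nat c)" unfolding s2_def by (rule pi2_coset) (simp add: hh(1))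
  also have "\<dots> = (int (nat c) * \<pi> hh) mod int p" by (rule pi_pow[OF hh(1)])
  also have "\<dots> = c" using c0 hh(2) by simp
  finally show ?thesis .
qed

lemma s2_cont: "continuous_map (cyclic_topology p) QT s2"
  unfolding cyclic_topology_def continuous_map_from_discrete_topology QT_top
  using s2_hom by (simp add: hom_def)

lemma main: "split_torus_extension (G Mod NN) QT n p"
  unfolding split_torus_extension_def torus_extension_def
  using i2_hom i2_inj i2_cont pi2_hom pi2_surj pi2_cont pi2_kernel s2_hom s2_cont s2_section
  by blast

end

theorem lemma2p4:
  fixes G :: "('g, 'm) monoid_scheme" and X :: "'g topology"
    and p n :: nat and \<iota> :: "(nat \<Rightarrow> complex) \<Rightarrow> 'g" and \<pi> :: "'g \<Rightarrow> int"
  assumes "prime p" and "n \<ge> 1"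
    and "topological_group G X" and "compact_space X" and "Hausdorff_space X"
    and "torus_extension G X n p \<iota> \<pi>"
  shows "\<exists>N l. N \<lhd> G \<and> closedin X N \<and> 1 \<le> l \<and> l \<le> n
           \<and> split_torus_extension (G Mod N) (quotient_group_topology G X N) l p"
proof -
  interpret L G X p n \<iota> \<pi>
    using assms by (simp add: L_def)
  show ?thesis using NN_normal NN_closed main assms(2) by blast
qed

end
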